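(* Let $\Gamma=(V,E)$ be a graph, for each $v\in V$ let $C_v$ be a left LCM monoid, and let $C=\Gamma_{v\in V}C_v$. If $x,y\in C_v$ for some $v\in V$, then $C_vx\cap C_vy=\emptyset$ if and only if $Cx\cap Cy=\emptyset$. Moreover, if $C_vx\cap C_vy=C_vz$ with $z\in C_v$, then $Cx\cap Cy=Cz$.
   Context: A graph $\Gamma=(V,E)$ has vertex set $V$ and irreflexive symmetric edge relation $E$. The graph product $\Gamma_{v\in V}C_v$ of pairwise disjoint monoids $C_v$ is the quotient of their free product by the congruence generated by all $(mn,nm)$ with $m\in C_u$, $n\in C_v$, $(u,v)\in E$; each $C_v$ is identified with its image in $C$. A left LCM monoid is a right cancellative monoid in which the intersection of any two principal left ideals is empty or principal. *)

theory Defs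
  imports "HOL-Algebra.Group"
begin

definition is_graph :: "'v set \<Rightarrow> ('v \<Rightarrow> 'v \<Rightarrow> bool) \<Rightarrow> bool" where
  "is_graph V E \<longleftrightarrow> (\<forall>u v. E u v \<longrightarrow> u \<in> V \<and> v \<in> V) \<and>
     (\<forall>u v. E u v \<longrightarrow> E v u) \<and> (\<forall>v. \<not> E v v)"

definition lideal :: "('a, 'b) monoid_scheme \<Rightarrow> 'a \<Rightarrow> 'a set" where
  "lideal M x = {c \<otimes>\<^bsub>M\<^esub> x | c. c \<in> carrier M}"

definition right_cancellative :: "('a, 'b) monoid_scheme \<Rightarrow> bool" where
  "right_cancellative M \<longleftrightarrow>
     (\<forall>a\<in>carrier M. \<forall>b\<in>carrier M. \<forall>c\<in>carrier M. a \<otimes>\<^bsub>M\<^esub> c = b \<otimes>\<^bsub>M\<^esub> c \<longrightarrow> a = b)"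

definition left_LCM_monoid :: "('a, 'b) monoid_scheme \<Rightarrow> bool" where
  "left_LCM_monoid M \<longleftrightarrow> monoid M \<and> right_cancellative M \<and>
     (\<forall>x\<in>carrier M. \<forall>y\<in>carrier M.
        lideal M x \<inter> lideal M y = {} \<or> (\<exists>z\<in>carrier M. lideal M x \<inter> lideal M y = lideal M z))"

definition gp_words :: "'v set \<Rightarrow> ('v \<Rightarrow> 'a monoid) \<Rightarrow> ('v \<times> 'a) list set" where
  "gp_words V M = {w. \<forall>(v, m) \<in> set w. v \<in> V \<and> m \<in> carrier (M v)}"

inductive gp_rel :: "'v set \<Rightarrow> ('v \<Rightarrow> 'v \<Rightarrow> bool) \<Rightarrow> ('v \<Rightarrow> 'a monoid) \<Rightarrow>
    ('v \<times> 'a) list \<Rightarrow> ('v \<times> 'a) list \<Rightarrow> bool"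
  for V E M where
  gp_refl: "w \<in> gp_words V M \<Longrightarrow> gp_rel V E M w w"
| gp_sym: "gp_rel V E M w w' \<Longrightarrow> gp_rel V E M w' w"
| gp_trans: "gp_rel V E M w w' \<Longrightarrow> gp_rel V E M w' w'' \<Longrightarrow> gp_rel V E M w w''"
| gp_unit: "\<lbrakk>p \<in> gp_words V M; q \<in> gp_words V M; v \<in> V\<rbrakk> \<Longrightarrow>
     gp_rel V E M (p @ [(v, \<one>\<^bsub>M v\<^esub>)] @ q) (p @ q)"
| gp_mult: "\<lbrakk>p \<in> gp_words V M; q \<in> gp_words V M; v \<in> V; a \<in> carrier (M v); b \<in> carrier (M v)\<rbrakk> \<Longrightarrow>
     gp_rel V E M (p @ [(v, a), (v, b)] @ q) (p @ [(v, a \<otimes>\<^bsub>M v\<^esub> b)] @ q)"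
| gp_comm: "\<lbrakk>p \<in> gp_words V M; q \<in> gp_words V M; E u v; a \<in> carrier (M u); b \<in> carrier (M v)\<rbrakk> \<Longrightarrow>
     gp_rel V E M (p @ [(u, a), (v, b)] @ q) (p @ [(v, b), (u, a)] @ q)"

definition gp_class :: "'v set \<Rightarrow> ('v \<Rightarrow> 'v \<Rightarrow> bool) \<Rightarrow> ('v \<Rightarrow> 'a monoid) \<Rightarrow>
    ('v \<times> 'a) list \<Rightarrow> ('v \<times> 'a) list set" where
  "gp_class V E M w = {w'. gp_rel V E M w w'}"

text \<open>The graph product monoid: congruence classes of words, with concatenation.\<close>
definition graph_product :: "'v set \<Rightarrow> ('v \<Rightarrow> 'v \<Rightarrow> bool) \<Rightarrow> ('v \<Rightarrow> 'a monoid) \<Rightarrow>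
    ('v \<times> 'a) list set monoid" where
  "graph_product V E M =
     \<lparr> carrier = gp_class V E M ` gp_words V M,
       mult = (\<lambda>X Y. \<Union>a\<in>X. \<Union>b\<in>Y. gp_class V E M (a @ b)),
       one = gp_class V E M [] \<rparr>"

text \<open>The canonical map C_v \<rightarrow> C (by which C_v is identified with its image).\<close>
definition gp_incl :: "'v set \<Rightarrow> ('v \<Rightarrow> 'v \<Rightarrow> bool) \<Rightarrow> ('v \<Rightarrow> 'a monoid) \<Rightarrow>
    'v \<Rightarrow> 'a \<Rightarrow> ('v \<times> 'a) list set" where
  "gp_incl V E M v m = gp_class V E M [(v, m)]"

end

theory Submission
  imports Defs
begin



lemma gp_words_Nil[simp]: "[] \<in> gp_words V M" by (simp add: gp_words_def)
lemma gp_words_Cons[simp]: "(l # w) \<in> gp_words V M \<longleftrightarrow> fst l \<in> V \<and> snd l \<in> carrier (M (fst l)) \<and> w \<in> gp_words V M"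
  by (cases l) (auto simp: gp_words_def)
lemma gp_words_append[simp]: "(p @ q) \<in> gp_words V M \<longleftrightarrow> p \<in> gp_words V M \<and> q \<in> gp_words V M"
  by (auto simp: gp_words_def)

locale gpl =
  fixes V :: "'v set" and E :: "'v \<Rightarrow> 'v \<Rightarrow> bool" and M :: "'v \<Rightarrow> 'a monoid"
  assumes graph: "is_graph V E"
    and mon: "\<And>v. v \<in> V \<Longrightarrow> monoid (M v)"
begin

abbreviation "R \<equiv> gp_rel V E M"
abbreviation "W \<equiv> gp_words V M"

lemma E_V: "E u v \<Longrightarrow> u \<in> V \<and> v \<in> V" using graph by (auto simp: is_graph_def)
lemma E_sym: "E u v \<Longrightarrow> E v u" using graph by (auto simp: is_graph_def)
lemma E_irr: "\<not> E v v" using graph by (auto simp: is_graph_def)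

lemma gp_rel_words: "R w w' \<Longrightarrow> w \<in> W \<and> w' \<in> W"
proof (induction rule: gp_rel.induct)
  case (gp_unit p q v) then show ?case using monoid.one_closed[OF mon[OF gp_unit(3)]] by simp
next
  case (gp_mult p q v a b) then show ?case using monoid.m_closed[OF mon[OF gp_mult(3)]] by simp
next
  case (gp_comm p q u v a b) then show ?case using E_V[OF gp_comm(3)] by simp
qed auto

lemma gp_rel_append_right: "R w w' \<Longrightarrow> q \<in> W \<Longrightarrow> R (w @ q) (w' @ q)"
proof (induction rule: gp_rel.induct)
  case (gp_refl w) then show ?case by (auto intro: gp_rel.gp_refl)
next
  case (gp_sym w w') then show ?case by (auto intro: gp_rel.gp_sym)
next
  case (gp_trans w w' w'') then show ?case by (auto intro: gp_rel.gp_trans)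
next
  case (gp_unit p q' v) then show ?case using gp_rel.gp_unit[where p=p and q="q'@q"] by simp
next
  case (gp_mult p q' v a b) then show ?case using gp_rel.gp_mult[where p=p and q="q'@q"] by simp
next
  case (gp_comm p q' u v a b) then show ?case using gp_rel.gp_comm[where p=p and q="q'@q"] by simp
qed

lemma gp_rel_append_left: "R w w' \<Longrightarrow> p \<in> W \<Longrightarrow> R (p @ w) (p @ w')"
proof (induction rule: gp_rel.induct)
  case (gp_refl w) then show ?case by (auto intro: gp_rel.gp_refl)
next
  case (gp_sym w w') then show ?case by (auto intro: gp_rel.gp_sym)
next
  case (gp_trans w w' w'') then show ?case by (auto intro: gp_rel.gp_trans)
next
  case (gp_unit p' q v) then show ?case using gp_rel.gp_unit[where p="p@p'" and q=q] by simp
next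
  case (gp_mult p' q v a b) then show ?case using gp_rel.gp_mult[where p="p@p'" and q=q] by simp
next
  case (gp_comm p' q u v a b) then show ?case using gp_rel.gp_comm[where p="p@p'" and q=q] by simp
qed

lemma gp_rel_append: "R w w' \<Longrightarrow> R q q' \<Longrightarrow> R (w @ q) (w' @ q')"
proof -
  assume a: "R w w'" and b: "R q q'"
  have "R (w @ q) (w' @ q)" using gp_rel_append_right[OF a] gp_rel_words[OF b] by blast
  moreover have "R (w' @ q) (w' @ q')" using gp_rel_append_left[OF b] gp_rel_words[OF a] by blast
  ultimately show ?thesis by (rule gp_rel.gp_trans)
qed

lemma class_eq: "R w w' \<Longrightarrow> gp_class V E M w = gp_class V E M w'"
  unfolding gp_class_def by (auto intro: gp_rel.gp_trans gp_rel.gp_sym)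

lemma class_eqD: "gp_class V E M w = gp_class V E M w' \<Longrightarrow> w' \<in> W \<Longrightarrow> R w w'"
  unfolding gp_class_def using gp_rel.gp_refl by blast

lemma mult_class: "p \<in> W \<Longrightarrow> q \<in> W \<Longrightarrow>
   mult (graph_product V E M) (gp_class V E M p) (gp_class V E M q) = gp_class V E M (p @ q)"
proof -
  assume p: "p \<in> W" and q: "q \<in> W"
  have "\<And>a b. a \<in> gp_class V E M p \<Longrightarrow> b \<in> gp_class V E M q \<Longrightarrow> gp_class V E M (a @ b) = gp_class V E M (p @ q)"
    by (metis class_eq gp_class_def gp_rel_append mem_Collect_eq)
  moreover have "p \<in> gp_class V E M p" "q \<in> gp_class V E M q" using p q by (auto simp: gp_class_def intro: gp_rel.gp_refl)
  ultimately have H: "\<And>a b. a \<in> gp_class V E M p \<Longrightarrow> b \<in> gp_class V E M q \<Longrightarrow> gp_class V E M (a @ b) = gp_class V E M (p @ q)"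
    and ne: "gp_class V E M p \<noteq> {}" "gp_class V E M q \<noteq> {}" by blast+
  have "mult (graph_product V E M) (gp_class V E M p) (gp_class V E M q) =
     (\<Union>a\<in>gp_class V E M p. \<Union>b\<in>gp_class V E M q. gp_class V E M (a @ b))"
    by (simp add: graph_product_def)
  also have "\<dots> = (\<Union>a\<in>gp_class V E M p. \<Union>b\<in>gp_class V E M q. gp_class V E M (p @ q))"
    using H by (intro SUP_cong refl) simp
  also have "\<dots> = gp_class V E M (p @ q)" using ne by simp
  finally show ?thesis .
qed

lemma lideal_incl: assumes v: "v \<in> V" and x: "x \<in> carrier (M v)" shows "
  lideal (graph_product V E M) (gp_incl V E M v x) = {gp_class V E M (p @ [(v,x)]) | p. p \<in> W}"
proof -
  have xw: "[(v,x)] \<in> W" using v x by simp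
  have car: "carrier (graph_product V E M) = gp_class V E M ` W" by (simp add: graph_product_def)
  show ?thesis unfolding lideal_def gp_incl_def car
  proof (intro equalityI subsetI)
    fix X assume "X \<in> {c \<otimes>\<^bsub>graph_product V E M\<^esub> gp_class V E M [(v, x)] |c. c \<in> gp_class V E M ` W}"
    then obtain p where "p \<in> W" "X = gp_class V E M p \<otimes>\<^bsub>graph_product V E M\<^esub> gp_class V E M [(v, x)]" by blast
    then show "X \<in> {gp_class V E M (p @ [(v,x)]) | p. p \<in> W}" using mult_class[OF _ xw] by auto
  next
    fix X assume "X \<in> {gp_class V E M (p @ [(v,x)]) | p. p \<in> W}"
    then obtain p where p: "p \<in> W" "X = gp_class V E M (p @ [(v,x)])" by blast
    then have "X = gp_class V E M p \<otimes>\<^bsub>graph_product V E M\<^esub> gp_class V E M [(v, x)]" using mult_class[OF _ xw] by auto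
    then show "X \<in> {c \<otimes>\<^bsub>graph_product V E M\<^esub> gp_class V E M [(v, x)] |c. c \<in> gp_class V E M ` W}"
      using p(1) by blast
  qed
qed

end



definition dep :: "('v \<Rightarrow> 'v \<Rightarrow> bool) \<Rightarrow> 'v set \<Rightarrow> bool" where
  "dep E K \<longleftrightarrow> (\<exists>x y. K = {x,y} \<and> \<not> E x y)"
definition tex :: "('v \<Rightarrow> 'v \<Rightarrow> bool) \<Rightarrow> ('v set \<Rightarrow> ('v \<times> 'a) list) \<Rightarrow> 'v \<Rightarrow> bool" where
  "tex E P u \<longleftrightarrow> (\<forall>K. u \<in> K \<longrightarrow> dep E K \<longrightarrow> P K \<noteq> [] \<and> fst (last (P K)) = u)"
definition upd :: "('v \<Rightarrow> 'v \<Rightarrow> bool) \<Rightarrow> ('v set \<Rightarrow> ('v \<times> 'a) list) \<Rightarrow> 'v \<Rightarrow> (('v \<times> 'a) list \<Rightarrow> ('v \<times> 'a) list) \<Rightarrow> ('v set \<Rightarrow> ('v \<times> 'a) list)" where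
  "upd E P u f = (\<lambda>K. if u \<in> K \<and> dep E K then f (P K) else P K)"
definition actP :: "('v \<Rightarrow> 'v \<Rightarrow> bool) \<Rightarrow> ('v \<Rightarrow> 'a monoid) \<Rightarrow> ('v set \<Rightarrow> ('v \<times> 'a) list) \<Rightarrow> 'v \<Rightarrow> 'a \<Rightarrow> ('v set \<Rightarrow> ('v \<times> 'a) list)" where
  "actP E M P u a = (if a = \<one>\<^bsub>M u\<^esub> then P
     else if tex E P u then
       (let d = snd (last (P {u})) \<otimes>\<^bsub>M u\<^esub> a in upd E P u (\<lambda>L. butlast L @ (if d = \<one>\<^bsub>M u\<^esub> then [] else [(u,d)])))
     else upd E P u (\<lambda>L. L @ [(u,a)]))"
definition Fw :: "('v \<Rightarrow> 'v \<Rightarrow> bool) \<Rightarrow> ('v \<Rightarrow> 'a monoid) \<Rightarrow> ('v \<times> 'a) list \<Rightarrow> ('v set \<Rightarrow> ('v \<times> 'a) list)" where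
  "Fw E M w = foldl (\<lambda>P l. actP E M P (fst l) (snd l)) (\<lambda>K. []) w"
definition cnt :: "'v \<Rightarrow> ('v \<times> 'a) list \<Rightarrow> nat" where
  "cnt u A = length (filter (\<lambda>l. fst l = u) A)"
definition Inv :: "('v \<Rightarrow> 'v \<Rightarrow> bool) \<Rightarrow> ('v \<Rightarrow> 'a monoid) \<Rightarrow> ('v set \<Rightarrow> ('v \<times> 'a) list) \<Rightarrow> bool" where
  "Inv E M P \<longleftrightarrow> (\<forall>K l. l \<in> set (P K) \<longrightarrow> fst l \<in> K \<and> snd l \<in> carrier (M (fst l)) \<and> snd l \<noteq> \<one>\<^bsub>M (fst l)\<^esub>) \<and>
     (\<forall>K u. dep E K \<longrightarrow> u \<in> K \<longrightarrow> filter (\<lambda>l. fst l = u) (P K) = P {u}) \<and>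
     (\<forall>u i. Suc i < length (P {u}) \<longrightarrow>
        (\<exists>x A l B. x \<noteq> u \<and> \<not> E u x \<and> P {u,x} = A @ [l] @ B \<and> fst l = x \<and> cnt u A = Suc i))"

lemma Fw_snoc: "Fw E M (w @ [l]) = actP E M (Fw E M w) (fst l) (snd l)"
  by (simp add: Fw_def)

lemma cnt_append[simp]: "cnt u (A @ B) = cnt u A + cnt u B" by (simp add: cnt_def)
lemma cnt_Cons[simp]: "cnt u (l # B) = (if fst l = u then Suc (cnt u B) else cnt u B)" by (simp add: cnt_def)
lemma cnt_Nil[simp]: "cnt u [] = 0" by (simp add: cnt_def)
lemma cnt_0: "cnt u A = 0 \<longleftrightarrow> (\<forall>l\<in>set A. fst l \<noteq> u)" by (simp add: cnt_def filter_empty_conv)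

lemma last_filter: "xs \<noteq> [] \<Longrightarrow> p (last xs) \<Longrightarrow> last (filter p xs) = last xs"
  by (metis (no_types, lifting) append_butlast_last_id filter.simps(1,2) filter_append last_snoc)
lemma filter_butlast: "xs \<noteq> [] \<Longrightarrow> p (last xs) \<Longrightarrow> filter p (butlast xs) = butlast (filter p xs)"
  by (metis (no_types, lifting) append_butlast_last_id butlast_snoc filter.simps(1,2) filter_append)
lemma filter_butlast2: "xs \<noteq> [] \<Longrightarrow> \<not> p (last xs) \<Longrightarrow> filter p (butlast xs) = filter p xs"
  by (metis (no_types, lifting) append_butlast_last_id append_Nil2 filter.simps(1,2) filter_append)

lemma upd_apply: "upd E P u f K = (if u \<in> K \<and> dep E K then f (P K) else P K)" by (simp add: upd_def)
lemma upd_upd: "upd E (upd E P u f) u g = upd E P u (g \<circ> f)" by (auto simp: upd_def)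

context gpl begin

lemma dep_single: "dep E {u}" using E_irr unfolding dep_def by blast
lemma dep_pair: "\<not> E u x \<Longrightarrow> dep E {u,x}" unfolding dep_def by blast
lemma dep_cases: "dep E K \<Longrightarrow> u \<in> K \<Longrightarrow> \<exists>x. K = {u,x} \<and> \<not> E u x"
  unfolding dep_def by (auto dest: E_sym)
lemma dep_adj: "E u w \<Longrightarrow> dep E K \<Longrightarrow> u \<in> K \<Longrightarrow> w \<notin> K"
  by (metis E_irr dep_cases insert_iff singletonD)

lemma Inv_letter: "Inv E M P \<Longrightarrow> l \<in> set (P K) \<Longrightarrow> fst l \<in> K \<and> snd l \<in> carrier (M (fst l)) \<and> snd l \<noteq> \<one>\<^bsub>M (fst l)\<^esub>"
  unfolding Inv_def by blast
lemma Inv_filter: "Inv E M P \<Longrightarrow> dep E K \<Longrightarrow> u \<in> K \<Longrightarrow> filter (\<lambda>l. fst l = u) (P K) = P {u}"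
  unfolding Inv_def by blast
lemma Inv_red: "Inv E M P \<Longrightarrow> Suc i < length (P {u}) \<Longrightarrow>
        (\<exists>x A l B. x \<noteq> u \<and> \<not> E u x \<and> P {u,x} = A @ [l] @ B \<and> fst l = x \<and> cnt u A = Suc i)"
  unfolding Inv_def by blast

lemma len_single: "Inv E M P \<Longrightarrow> length (P {u}) = cnt u (P K) \<and> cnt u (P {u}) = length (P {u})" if "dep E K" "u \<in> K"
  using Inv_filter[OF _ that] Inv_filter[OF _ dep_single, of P u] by (metis cnt_def singletonI)

lemma tex_last: assumes "Inv E M P" "tex E P u" "dep E K" "u \<in> K"
  shows "P K \<noteq> [] \<and> last (P K) = last (P {u}) \<and> fst (last (P {u})) = u"
proof -
  have ne: "P K \<noteq> []" and f: "fst (last (P K)) = u" using assms(2-4) unfolding tex_def by auto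
  have "last (filter (\<lambda>l. fst l = u) (P K)) = last (P K)" using last_filter[OF ne, of "\<lambda>l. fst l = u"] f by simp
  then show ?thesis using Inv_filter[OF assms(1,3,4)] ne f by simp
qed

lemma no_tex_remove: assumes I: "Inv E M P" and T: "tex E P u"
  shows "\<not> tex E (upd E P u butlast) u"
proof
  assume T': "tex E (upd E P u butlast) u"
  have ne: "P {u} \<noteq> []" using T dep_single unfolding tex_def by blast
  show False
  proof (cases "length (P {u}) = 1")
    case True
    then have "upd E P u butlast {u} = []" using dep_single by (auto simp add: upd_apply length_Suc_conv)
    then show False using T' dep_single unfolding tex_def by blast
  next
    case False
    then have "Suc (length (P {u}) - 2) < length (P {u})" using ne by (cases "P {u}") auto
    from Inv_red[OF I this] obtain x A l B where
      x: "x \<noteq> u" "\<not> E u x" and PK: "P {u,x} = A @ [l] @ B" and l: "fst l = x"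
      and cA: "cnt u A = Suc (length (P {u}) - 2)" by blast
    have dK: "dep E {u,x}" using dep_pair[OF x(2)] .
    have cK: "cnt u (P {u,x}) = length (P {u})" using len_single[OF dK _ I] by simp
    have Bne: "B \<noteq> []"
    proof
      assume "B = []"
      then have "last (P {u,x}) = l" using PK by simp
      then show False using T dK l x(1) unfolding tex_def by auto
    qed
    have lB: "fst (last B) = u" using T dK PK Bne unfolding tex_def by auto
    have "length (P {u}) \<noteq> 0" using ne by simp
    then have n2: "length (P {u}) \<ge> 2" using False by linarith
    have cB: "cnt u B = 1" using cK cA PK l x(1) n2 by simp
    have "cnt u B = cnt u (butlast B) + 1" using Bne lB
      by (metis One_nat_def append_butlast_last_id cnt_Cons cnt_Nil cnt_append)
    then have "cnt u (butlast B) = 0" using cB by simp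
    then have nb: "\<forall>l'\<in>set (butlast B). fst l' \<noteq> u" using cnt_0[of u "butlast B"] by simp
    have U: "upd E P u butlast {u,x} = A @ [l] @ butlast B" using PK Bne dK by (simp add: upd_apply butlast_append)
    have "fst (last (A @ [l] @ butlast B)) \<noteq> u"
      using nb l x(1) by (cases "butlast B = []") auto
    then show False using T' dK U unfolding tex_def by auto
  qed
qed

end



definition fP :: "('v \<Rightarrow> 'v \<Rightarrow> bool) \<Rightarrow> ('v \<Rightarrow> 'a monoid) \<Rightarrow> ('v set \<Rightarrow> ('v \<times> 'a) list) \<Rightarrow> 'v \<Rightarrow> 'a \<Rightarrow> ('v \<times> 'a) list \<Rightarrow> ('v \<times> 'a) list" where
  "fP E M P u a = (if a = \<one>\<^bsub>M u\<^esub> then id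
     else if tex E P u then
       (let d = snd (last (P {u})) \<otimes>\<^bsub>M u\<^esub> a in (\<lambda>L. butlast L @ (if d = \<one>\<^bsub>M u\<^esub> then [] else [(u,d)])))
     else (\<lambda>L. L @ [(u,a)]))"

lemma upd_id: "upd E P u id = P" by (auto simp: upd_def)

lemma actP_upd: "actP E M P u a = upd E P u (fP E M P u a)"
  unfolding actP_def fP_def by (auto simp: upd_id Let_def)

lemma upd_id2: "(\<And>K. u \<in> K \<Longrightarrow> dep E K \<Longrightarrow> f (P K) = P K) \<Longrightarrow> upd E P u f = P"
  by (auto simp: upd_def)

lemma tex_upd_snoc: "tex E (upd E P u (\<lambda>L. h L @ [(u,d)])) u"
  by (auto simp: tex_def upd_apply)

lemma upd_single: "dep E {u} \<Longrightarrow> upd E P u f {u} = f (P {u})" by (simp add: upd_apply)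

context gpl begin

lemma fP_cong: assumes "\<And>K. u \<in> K \<Longrightarrow> dep E K \<Longrightarrow> P K = P' K" shows "fP E M P u a = fP E M P' u a"
proof -
  have "tex E P u = tex E P' u" using assms unfolding tex_def by auto
  moreover have "P {u} = P' {u}" using assms dep_single by auto
  ultimately show ?thesis unfolding fP_def by simp
qed

lemma actP_comm: assumes "E u w"
  shows "actP E M (actP E M P u a) w b = actP E M (actP E M P w b) u a"
proof -
  have nw: "\<And>K. w \<in> K \<Longrightarrow> dep E K \<Longrightarrow> \<not> (u \<in> K \<and> dep E K)" using dep_adj[OF assms] by blast
  have nu: "\<And>K. u \<in> K \<Longrightarrow> dep E K \<Longrightarrow> \<not> (w \<in> K \<and> dep E K)" using dep_adj[OF E_sym[OF assms]] by blast
  have f1: "fP E M (actP E M P u a) w b = fP E M P w b"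
    by (rule fP_cong) (use nw in \<open>auto simp: actP_upd upd_apply\<close>)
  have f2: "fP E M (actP E M P w b) u a = fP E M P u a"
    by (rule fP_cong) (use nu in \<open>auto simp: actP_upd upd_apply\<close>)
  have l1: "actP E M (actP E M P u a) w b = upd E (upd E P u (fP E M P u a)) w (fP E M P w b)"
    using actP_upd[of E M "actP E M P u a" w b] f1 by (simp add: actP_upd[of E M P u a])
  have l2: "actP E M (actP E M P w b) u a = upd E (upd E P w (fP E M P w b)) u (fP E M P u a)"
    using actP_upd[of E M "actP E M P w b" u a] f2 by (simp add: actP_upd[of E M P w b])
  show ?thesis unfolding l1 l2
  proof (rule ext)
    fix K
    show "upd E (upd E P u (fP E M P u a)) w (fP E M P w b) K = upd E (upd E P w (fP E M P w b)) u (fP E M P u a) K"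
      using nw[of K] by (cases "w \<in> K \<and> dep E K"; cases "u \<in> K \<and> dep E K") (auto simp add: upd_apply)
  qed
qed

lemma tex_rep: assumes I: "Inv E M P" and T: "tex E P u" and u: "u \<in> V"
  shows "snd (last (P {u})) \<in> carrier (M u) \<and> snd (last (P {u})) \<noteq> \<one>\<^bsub>M u\<^esub> \<and>
    (\<forall>K. u \<in> K \<longrightarrow> dep E K \<longrightarrow> P K = butlast (P K) @ [(u, snd (last (P {u})))])"
proof -
  have t1: "P {u} \<noteq> [] \<and> last (P {u}) = last (P {u}) \<and> fst (last (P {u})) = u" using tex_last[OF I T dep_single] by simp
  then have "last (P {u}) \<in> set (P {u})" by simp
  from Inv_letter[OF I this] t1 have c: "snd (last (P {u})) \<in> carrier (M u) \<and> snd (last (P {u})) \<noteq> \<one>\<^bsub>M u\<^esub>" by simp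
  have "\<forall>K. u \<in> K \<longrightarrow> dep E K \<longrightarrow> P K = butlast (P K) @ [(u, snd (last (P {u})))]"
  proof (intro allI impI)
    fix K assume "u \<in> K" "dep E K"
    from tex_last[OF I T this(2,1)] have "P K \<noteq> []" "last (P K) = last (P {u})" "fst (last (P {u})) = u" by auto
    then show "P K = butlast (P K) @ [(u, snd (last (P {u})))]"
      by (metis append_butlast_last_id prod.collapse)
  qed
  with c show ?thesis by blast
qed

lemma tex_c: "Inv E M P \<Longrightarrow> tex E P u \<Longrightarrow> u \<in> V \<Longrightarrow> snd (last (P {u})) \<in> carrier (M u) \<and> snd (last (P {u})) \<noteq> \<one>\<^bsub>M u\<^esub>"
  using tex_rep by blast
lemma tex_eq: "Inv E M P \<Longrightarrow> tex E P u \<Longrightarrow> u \<in> V \<Longrightarrow> u \<in> K \<Longrightarrow> dep E K \<Longrightarrow> P K = butlast (P K) @ [(u, snd (last (P {u})))]"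
  using tex_rep by blast

lemma actP_mult: assumes I: "Inv E M P" and u: "u \<in> V" and a: "a \<in> carrier (M u)" and b: "b \<in> carrier (M u)"
  shows "actP E M (actP E M P u a) u b = actP E M P u (a \<otimes>\<^bsub>M u\<^esub> b)"
proof -
  interpret G: monoid "M u" using mon[OF u] .
  show ?thesis
  proof (cases "a = \<one>\<^bsub>M u\<^esub>")
    case True then show ?thesis using b by (simp add: actP_def)
  next
    case a1: False
    show ?thesis
    proof (cases "b = \<one>\<^bsub>M u\<^esub>")
      case True then show ?thesis using a by (simp add: actP_def)
    next
      case b1: False
      show ?thesis
      proof (cases "tex E P u")
        case T: True
        define c where "c = snd (last (P {u}))"
        have c: "c \<in> carrier (M u)" "c \<noteq> \<one>\<^bsub>M u\<^esub>" using tex_c[OF I T u] unfolding c_def by auto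
        have rep: "\<And>K. u \<in> K \<Longrightarrow> dep E K \<Longrightarrow> P K = butlast (P K) @ [(u, c)]"
          unfolding c_def by (rule tex_eq[OF I T u])
        have bk: "upd E P u (\<lambda>L. butlast L @ [(u,c)]) = P" by (rule upd_id2) (metis rep)
        have A1: "actP E M P u a = upd E P u (\<lambda>L. butlast L @ (if c \<otimes>\<^bsub>M u\<^esub> a = \<one>\<^bsub>M u\<^esub> then [] else [(u, c \<otimes>\<^bsub>M u\<^esub> a)]))"
          using a1 T unfolding actP_def c_def by simp
        show ?thesis
        proof (cases "c \<otimes>\<^bsub>M u\<^esub> a = \<one>\<^bsub>M u\<^esub>")
          case ca: True
          have "actP E M P u a = upd E P u butlast" using A1 ca by simp
          moreover have nt: "\<not> tex E (upd E P u butlast) u" using no_tex_remove[OF I T] .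
          ultimately have L: "actP E M (actP E M P u a) u b = upd E P u (\<lambda>L. butlast L @ [(u,b)])"
            using b1 by (simp add: actP_def upd_upd comp_def)
          show ?thesis
          proof (cases "a \<otimes>\<^bsub>M u\<^esub> b = \<one>\<^bsub>M u\<^esub>")
            case True
            have "b = c" using ca True c a b
              by (metis G.l_one G.m_assoc G.r_one)
            then show ?thesis using L True bk by (simp add: actP_def)
          next
            case False
            have "c \<otimes>\<^bsub>M u\<^esub> (a \<otimes>\<^bsub>M u\<^esub> b) = b" using ca c a b by (metis G.l_one G.m_assoc)
            then show ?thesis using L False T b1 unfolding actP_def c_def by (simp add: Let_def)
          qed
        next
          case ca: False
          have tx: "tex E (actP E M P u a) u" using A1 ca tex_upd_snoc[of E P u butlast] by simp
          have la: "snd (last (actP E M P u a {u})) = c \<otimes>\<^bsub>M u\<^esub> a" using A1 ca dep_single by (simp add: upd_apply)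
          have L: "actP E M (actP E M P u a) u b = upd E P u (\<lambda>L. butlast L @
               (if c \<otimes>\<^bsub>M u\<^esub> a \<otimes>\<^bsub>M u\<^esub> b = \<one>\<^bsub>M u\<^esub> then [] else [(u, c \<otimes>\<^bsub>M u\<^esub> a \<otimes>\<^bsub>M u\<^esub> b)]))"
            using b1 tx la A1 ca unfolding actP_def[of E M "actP E M P u a"] by (simp add: Let_def upd_upd comp_def)
          have as: "c \<otimes>\<^bsub>M u\<^esub> a \<otimes>\<^bsub>M u\<^esub> b = c \<otimes>\<^bsub>M u\<^esub> (a \<otimes>\<^bsub>M u\<^esub> b)" using c a b G.m_assoc by simp
          show ?thesis
          proof (cases "a \<otimes>\<^bsub>M u\<^esub> b = \<one>\<^bsub>M u\<^esub>")
            case True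
            then have "c \<otimes>\<^bsub>M u\<^esub> a \<otimes>\<^bsub>M u\<^esub> b = c" using as c by simp
            then show ?thesis using L True bk c by (simp add: actP_def)
          next
            case False
            then show ?thesis using L as T unfolding actP_def[of E M P u "a \<otimes>\<^bsub>M u\<^esub> b"] c_def by (simp add: Let_def)
          qed
        qed
      next
        case T: False
        have A1: "actP E M P u a = upd E P u (\<lambda>L. L @ [(u,a)])" using a1 T by (simp add: actP_def)
        have tx: "tex E (actP E M P u a) u" using A1 tex_upd_snoc[of E P u id] by simp
        have la: "snd (last (actP E M P u a {u})) = a" using A1 dep_single by (simp add: upd_apply)
        have L: "actP E M (actP E M P u a) u b = upd E P u (\<lambda>L. L @
               (if a \<otimes>\<^bsub>M u\<^esub> b = \<one>\<^bsub>M u\<^esub> then [] else [(u, a \<otimes>\<^bsub>M u\<^esub> b)]))"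
          using b1 tx la A1 unfolding actP_def[of E M "actP E M P u a"] by (simp add: Let_def upd_upd comp_def)
        show ?thesis
        proof (cases "a \<otimes>\<^bsub>M u\<^esub> b = \<one>\<^bsub>M u\<^esub>")
          case True then show ?thesis using L by (simp add: actP_def upd_id[unfolded id_def])
        next
          case False then show ?thesis using L T by (simp add: actP_def)
        qed
      qed
    qed
  qed
qed

end



context gpl begin

lemma Inv_intro:
  assumes "\<And>K l. l \<in> set (P K) \<Longrightarrow> fst l \<in> K \<and> snd l \<in> carrier (M (fst l)) \<and> snd l \<noteq> \<one>\<^bsub>M (fst l)\<^esub>"
    and "\<And>K w. dep E K \<Longrightarrow> w \<in> K \<Longrightarrow> filter (\<lambda>l. fst l = w) (P K) = P {w}"
    and "\<And>w i. Suc i < length (P {w}) \<Longrightarrow>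
        (\<exists>x A l B. x \<noteq> w \<and> \<not> E w x \<and> P {w,x} = A @ [l] @ B \<and> fst l = x \<and> cnt w A = Suc i)"
  shows "Inv E M P"
  using assms unfolding Inv_def by blast

lemma Inv_empty: "Inv E M (\<lambda>K. [])"
  by (rule Inv_intro) auto

lemma Inv_app: assumes I: "Inv E M P" and nT: "\<not> tex E P u" and a: "a \<in> carrier (M u)" "a \<noteq> \<one>\<^bsub>M u\<^esub>"
  shows "Inv E M (upd E P u (\<lambda>L. L @ [(u,a)]))"
proof (rule Inv_intro)
  let ?Q = "upd E P u (\<lambda>L. L @ [(u,a)])"
  fix K l assume "l \<in> set (?Q K)"
  then have "l \<in> set (P K) \<or> (u \<in> K \<and> l = (u,a))" by (auto simp: upd_apply split: if_splits)
  then show "fst l \<in> K \<and> snd l \<in> carrier (M (fst l)) \<and> snd l \<noteq> \<one>\<^bsub>M (fst l)\<^esub>"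
    using Inv_letter[OF I, of l K] a by auto
next
  let ?Q = "upd E P u (\<lambda>L. L @ [(u,a)])"
  fix K w assume dK: "dep E K" and wK: "w \<in> K"
  show "filter (\<lambda>l. fst l = w) (?Q K) = ?Q {w}"
    using Inv_filter[OF I dK wK] dep_single wK dK by (auto simp: upd_apply)
next
  let ?Q = "upd E P u (\<lambda>L. L @ [(u,a)])"
  fix w i assume i: "Suc i < length (?Q {w})"
  show "\<exists>x A l B. x \<noteq> w \<and> \<not> E w x \<and> ?Q {w,x} = A @ [l] @ B \<and> fst l = x \<and> cnt w A = Suc i"
  proof (cases "w = u")
    case False
    then have "?Q {w} = P {w}" by (simp add: upd_apply)
    with i obtain x A l B where x: "x \<noteq> w" "\<not> E w x" "P {w,x} = A @ [l] @ B" "fst l = x" "cnt w A = Suc i"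
      using Inv_red[OF I] by metis
    show ?thesis
    proof (cases "u \<in> {w,x}")
      case True
      then have "?Q {w,x} = A @ [l] @ (B @ [(u,a)])" using x dep_pair[OF x(2)] by (simp add: upd_apply)
      then show ?thesis using x by blast
    next
      case False
      then have "?Q {w,x} = A @ [l] @ B" using x by (simp add: upd_apply)
      then show ?thesis using x by blast
    qed
  next
    case True
    then have Qu: "?Q {w} = P {u} @ [(u,a)]" using dep_single by (simp add: upd_apply)
    show ?thesis
    proof (cases "Suc i < length (P {u})")
      case True
      then obtain x A l B where x: "x \<noteq> u" "\<not> E u x" "P {u,x} = A @ [l] @ B" "fst l = x" "cnt u A = Suc i"
        using Inv_red[OF I] by metis
      then have "?Q {u,x} = A @ [l] @ (B @ [(u,a)])" using dep_pair[OF x(2)] by (simp add: upd_apply)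
      then show ?thesis using x \<open>w = u\<close> by blast
    next
      case False
      then have len: "length (P {u}) = Suc i" using i Qu by simp
      from nT obtain K where uK: "u \<in> K" and dK: "dep E K" and bad: "\<not> (P K \<noteq> [] \<and> fst (last (P K)) = u)"
        unfolding tex_def by blast
      from dep_cases[OF dK uK] obtain x where K: "K = {u,x}" "\<not> E u x" by blast
      have cK: "cnt u (P K) = length (P {u})" using len_single[OF dK uK I] by simp
      then have ne: "P K \<noteq> []" using len by auto
      then have fl: "fst (last (P K)) \<noteq> u" using bad by blast
      have "last (P K) \<in> set (P K)" using ne by simp
      then have "fst (last (P K)) \<in> K" using Inv_letter[OF I] by blast
      then have fx: "fst (last (P K)) = x" using fl K by auto
      then have xu: "x \<noteq> u" using fl by blast
      have PK: "P K = butlast (P K) @ [last (P K)]" using ne by simp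
      have cA: "cnt u (butlast (P K)) = Suc i" using cK len fl PK by (metis add.right_neutral cnt_Cons cnt_Nil cnt_append)
      have "?Q {u,x} = butlast (P K) @ [last (P K)] @ [(u,a)]"
        using K dep_pair[OF K(2)] PK by (simp add: upd_apply)
      then show ?thesis using xu K(2) fx cA \<open>w = u\<close> by blast
    qed
  qed
qed

lemma Inv_rem: assumes I: "Inv E M P" and T: "tex E P u" and u: "u \<in> V"
    and X: "X = [] \<or> (\<exists>d. X = [(u,d)] \<and> d \<in> carrier (M u) \<and> d \<noteq> \<one>\<^bsub>M u\<^esub>)"
  shows "Inv E M (upd E P u (\<lambda>L. butlast L @ X))"
proof -
  define c where "c = snd (last (P {u}))"
  have rep: "\<And>K. u \<in> K \<Longrightarrow> dep E K \<Longrightarrow> P K = butlast (P K) @ [(u, c)]"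
    unfolding c_def by (rule tex_eq[OF I T u])
  have Xu: "\<And>l. l \<in> set X \<Longrightarrow> fst l = u" using X by auto
  let ?Q = "upd E P u (\<lambda>L. butlast L @ X)"
  show ?thesis
  proof (rule Inv_intro)
    fix K l assume "l \<in> set (?Q K)"
    then have "l \<in> set (P K) \<or> (u \<in> K \<and> l \<in> set X)" by (auto simp: upd_apply split: if_splits dest: in_set_butlastD)
    then show "fst l \<in> K \<and> snd l \<in> carrier (M (fst l)) \<and> snd l \<noteq> \<one>\<^bsub>M (fst l)\<^esub>"
      using Inv_letter[OF I, of l K] X by auto
  next
    fix K w assume dK: "dep E K" and wK: "w \<in> K"
    show "filter (\<lambda>l. fst l = w) (?Q K) = ?Q {w}"
    proof (cases "u \<in> K")
      case False
      then show ?thesis using Inv_filter[OF I dK wK] wK by (auto simp: upd_apply)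
    next
      case True
      define BK where "BK = butlast (P K)"
      have PK: "P K = BK @ [(u, c)]" unfolding BK_def by (rule rep[OF True dK])
      have F: "filter (\<lambda>l. fst l = w) (BK @ [(u, c)]) = P {w}" using Inv_filter[OF I dK wK] PK by simp
      show ?thesis
      proof (cases "w = u")
        case True
        have e: "filter (\<lambda>l. fst l = u) BK @ [(u,c)] = P {u}" using F True by simp
        have "filter (\<lambda>l. fst l = u) BK = butlast (P {u})"
          using arg_cong[of _ _ butlast, OF e] by simp
        moreover have "filter (\<lambda>l. fst l = u) X = X" using Xu by (simp add: filter_id_conv)
        ultimately show ?thesis using True \<open>u \<in> K\<close> dK dep_single by (simp add: upd_apply BK_def[symmetric])
      next
        case False
        have "filter (\<lambda>l. fst l = w) BK = P {w}"
          using F False by simp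
        moreover have "filter (\<lambda>l. fst l = w) X = []" using Xu False by (auto simp: filter_empty_conv)
        ultimately show ?thesis using False \<open>u \<in> K\<close> dK by (simp add: upd_apply BK_def[symmetric])
      qed
    qed
  next
    fix w i assume i: "Suc i < length (?Q {w})"
    show "\<exists>x A l B. x \<noteq> w \<and> \<not> E w x \<and> ?Q {w,x} = A @ [l] @ B \<and> fst l = x \<and> cnt w A = Suc i"
    proof (cases "w = u")
      case True
      have Pu: "P {u} = butlast (P {u}) @ [(u,c)]" by (rule rep[OF singletonI dep_single])
      have Qu: "?Q {u} = butlast (P {u}) @ X" using dep_single by (simp add: upd_apply)
      have "length X \<le> 1" using X by auto
      moreover have "length (P {u}) = length (butlast (P {u})) + 1" using arg_cong[OF Pu, of length] by simp
      moreover have "length (?Q {u}) = length (butlast (P {u})) + length X" using Qu by simp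
      moreover have "Suc i < length (?Q {u})" using i True by simp
      ultimately have "Suc i < length (P {u})" by linarith
      then obtain x A l B where x: "x \<noteq> u" "\<not> E u x" "P {u,x} = A @ [l] @ B" "fst l = x" "cnt u A = Suc i"
        using Inv_red[OF I] by metis
      have dK: "dep E {u,x}" using dep_pair[OF x(2)] .
      have cK: "cnt u (P {u,x}) = length (P {u})" using len_single[OF dK _ I] by simp
      have "cnt u B \<noteq> 0" using cK x \<open>Suc i < length (P {u})\<close> by simp
      then have Bne: "B \<noteq> []" by auto
      have "?Q {u,x} = A @ [l] @ (butlast B @ X)" using x(3) Bne dK by (simp add: upd_apply butlast_append)
      then show ?thesis using x True by blast
    next
      case False
      then have "?Q {w} = P {w}" by (simp add: upd_apply)
      with i obtain x A l B where x: "x \<noteq> w" "\<not> E w x" "P {w,x} = A @ [l] @ B" "fst l = x" "cnt w A = Suc i"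
        using Inv_red[OF I] by metis
      show ?thesis
      proof (cases "x = u")
        case False
        then have "?Q {w,x} = A @ [l] @ B" using x \<open>w \<noteq> u\<close> by (simp add: upd_apply)
        then show ?thesis using x by blast
      next
        case True
        have dK: "dep E {w,x}" using dep_pair[OF x(2)] .
        show ?thesis
        proof (cases "B = []")
          case False
          then have "?Q {w,x} = A @ [l] @ (butlast B @ X)" using x(3) dK True by (simp add: upd_apply butlast_append)
          then show ?thesis using x by blast
        next
          case Bn: True
          show ?thesis
          proof (cases "X = []")
            case True
            have cK: "cnt w (P {w,x}) = length (P {w})" using len_single[OF dK _ I] by simp
            have "length (P {w}) = Suc i" using cK x Bn \<open>w \<noteq> u\<close> \<open>x = u\<close> by simp
            then show ?thesis using i \<open>?Q {w} = P {w}\<close> by simp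
          next
            case False
            then obtain d where d: "X = [(u,d)]" using X by blast
            have "?Q {w,x} = A @ [(u,d)] @ []" using x(3) dK \<open>x = u\<close> Bn d by (simp add: upd_apply)
            then show ?thesis using x \<open>x = u\<close> by fastforce
          qed
        qed
      qed
    qed
  qed
qed

lemma Inv_actP: assumes I: "Inv E M P" and u: "u \<in> V" and a: "a \<in> carrier (M u)"
  shows "Inv E M (actP E M P u a)"
proof (cases "a = \<one>\<^bsub>M u\<^esub>")
  case True then show ?thesis using I by (simp add: actP_def)
next
  case a1: False
  show ?thesis
  proof (cases "tex E P u")
    case T: True
    define d where "d = snd (last (P {u})) \<otimes>\<^bsub>M u\<^esub> a"
    have "d \<in> carrier (M u)" using tex_c[OF I T u] a monoid.m_closed[OF mon[OF u]] unfolding d_def by blast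
    then have X: "(if d = \<one>\<^bsub>M u\<^esub> then [] else [(u,d)]) = [] \<or> (\<exists>d'. (if d = \<one>\<^bsub>M u\<^esub> then [] else [(u,d)]) = [(u,d')] \<and> d' \<in> carrier (M u) \<and> d' \<noteq> \<one>\<^bsub>M u\<^esub>)"
      by auto
    show ?thesis using Inv_rem[OF I T u X] a1 T unfolding actP_def d_def by (simp add: Let_def)
  next
    case T: False
    show ?thesis using Inv_app[OF I T a a1] a1 T by (simp add: actP_def)
  qed
qed

end



definition pr :: "('v \<Rightarrow> 'v \<Rightarrow> bool) \<Rightarrow> ('v \<times> 'a) list \<Rightarrow> ('v set \<Rightarrow> ('v \<times> 'a) list)" where
  "pr E r = (\<lambda>K. if dep E K then filter (\<lambda>l. fst l \<in> K) r else [])"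

definition tv :: "('v \<Rightarrow> 'v \<Rightarrow> bool) \<Rightarrow> ('v \<Rightarrow> 'a monoid) \<Rightarrow> ('v set \<Rightarrow> ('v \<times> 'a) list) \<Rightarrow> 'v \<Rightarrow> 'a" where
  "tv E M P u = (if tex E P u then snd (last (P {u})) else \<one>\<^bsub>M u\<^esub>)"

lemma Fw_prefix: "Fw E M p1 = Fw E M p2 \<Longrightarrow> Fw E M (p1 @ q) = Fw E M (p2 @ q)"
  by (simp add: Fw_def)

context gpl begin

lemma mult2: "p \<in> W \<Longrightarrow> v \<in> V \<Longrightarrow> a \<in> carrier (M v) \<Longrightarrow> b \<in> carrier (M v) \<Longrightarrow>
   R (p @ [(v,a),(v,b)]) (p @ [(v, a \<otimes>\<^bsub>M v\<^esub> b)])"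
  using gp_rel.gp_mult[where p=p and q="[]"] by simp

lemma unit1: "p \<in> W \<Longrightarrow> v \<in> V \<Longrightarrow> R (p @ [(v,\<one>\<^bsub>M v\<^esub>)]) p"
  using gp_rel.gp_unit[where p=p and q="[]"] by simp

lemma Inv_Fw: "w \<in> W \<Longrightarrow> Inv E M (Fw E M w)"
proof (induction w rule: rev_induct)
  case Nil then show ?case by (simp add: Fw_def Inv_empty)
next
  case (snoc l w) then show ?case by (simp add: Fw_snoc Inv_actP)
qed

lemma Fw_rel: "R w w' \<Longrightarrow> Fw E M w = Fw E M w'"
proof (induction rule: gp_rel.induct)
  case (gp_unit p q v)
  have "Fw E M (p @ [(v, \<one>\<^bsub>M v\<^esub>)]) = Fw E M p" by (simp add: Fw_snoc actP_def)
  from Fw_prefix[OF this, of q] show ?case by simp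
next
  case (gp_mult p q v a b)
  have "Fw E M (p @ [(v,a),(v,b)]) = Fw E M (p @ [(v, a \<otimes>\<^bsub>M v\<^esub> b)])"
    using actP_mult[OF Inv_Fw[OF gp_mult(1)] gp_mult(3-5)] Fw_snoc[of E M "p @ [(v,a)]" "(v,b)"]
    by (simp add: Fw_snoc)
  from Fw_prefix[OF this, of q] show ?case by simp
next
  case (gp_comm p q u v a b)
  have "Fw E M (p @ [(u,a),(v,b)]) = Fw E M (p @ [(v,b),(u,a)])"
    using actP_comm[OF gp_comm(3)] Fw_snoc[of E M "p @ [(u,a)]" "(v,b)"] Fw_snoc[of E M "p @ [(v,b)]" "(u,a)"]
    by (simp add: Fw_snoc)
  from Fw_prefix[OF this, of q] show ?case by simp
qed auto

lemma tv_act: assumes I: "Inv E M P" and v: "v \<in> V" and x: "x \<in> carrier (M v)"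
  shows "tv E M (actP E M P v x) v \<in> lideal (M v) x"
proof -
  interpret G: monoid "M v" using mon[OF v] .
  show ?thesis
  proof (cases "x = \<one>\<^bsub>M v\<^esub>")
    case True
    have "tv E M P v \<in> carrier (M v)"
      using tex_c[OF I _ v] unfolding tv_def by auto
    then show ?thesis using True unfolding lideal_def by (auto simp: actP_def) (metis G.r_one)
  next
    case x1: False
    show ?thesis
    proof (cases "tex E P v")
      case T: True
      define c where "c = snd (last (P {v}))"
      have c: "c \<in> carrier (M v)" using tex_c[OF I T v] unfolding c_def by auto
      have A: "actP E M P v x = upd E P v (\<lambda>L. butlast L @ (if c \<otimes>\<^bsub>M v\<^esub> x = \<one>\<^bsub>M v\<^esub> then [] else [(v, c \<otimes>\<^bsub>M v\<^esub> x)]))"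
        using x1 T unfolding actP_def c_def by simp
      show ?thesis
      proof (cases "c \<otimes>\<^bsub>M v\<^esub> x = \<one>\<^bsub>M v\<^esub>")
        case True
        then have "\<not> tex E (actP E M P v x) v" using A no_tex_remove[OF I T] by simp
        then show ?thesis using True c unfolding tv_def lideal_def by (metis (mono_tags, lifting) mem_Collect_eq)
      next
        case False
        have "tex E (actP E M P v x) v" using A False tex_upd_snoc[of E P v butlast] by simp
        moreover have "snd (last (actP E M P v x {v})) = c \<otimes>\<^bsub>M v\<^esub> x" using A False dep_single by (simp add: upd_apply)
        ultimately show ?thesis using c unfolding tv_def lideal_def by auto
      qed
    next
      case T: False
      have A: "actP E M P v x = upd E P v (\<lambda>L. L @ [(v,x)])" using x1 T by (simp add: actP_def)
      have "tex E (actP E M P v x) v" using A tex_upd_snoc[of E P v id] by simp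
      moreover have "snd (last (actP E M P v x {v})) = x" using A dep_single by (simp add: upd_apply)
      ultimately show ?thesis using x unfolding tv_def lideal_def by auto (metis G.l_one G.one_closed)
    qed
  qed
qed

lemma tv_rel: "p \<in> W \<Longrightarrow> R w (p @ [(v,x)]) \<Longrightarrow> v \<in> V \<Longrightarrow> x \<in> carrier (M v) \<Longrightarrow> tv E M (Fw E M w) v \<in> lideal (M v) x"
  using Fw_rel[of w "p @ [(v,x)]"] tv_act[OF Inv_Fw] by (simp add: Fw_snoc)

lemma commute_end: "r1 @ [(u,c)] @ r2 \<in> W \<Longrightarrow> (\<forall>l\<in>set r2. E u (fst l)) \<Longrightarrow> R (r1 @ [(u,c)] @ r2) (r1 @ r2 @ [(u,c)])"
proof (induction r2 arbitrary: r1)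
  case Nil then show ?case by (auto intro: gp_rel.gp_refl)
next
  case (Cons l r2)
  have w: "r1 \<in> W" "r2 \<in> W" "u \<in> V" "c \<in> carrier (M u)" "snd l \<in> carrier (M (fst l))" "fst l \<in> V" using Cons.prems by auto
  have s1: "R (r1 @ [(u,c), (fst l, snd l)] @ r2) (r1 @ [(fst l, snd l), (u,c)] @ r2)"
    using gp_rel.gp_comm[where p=r1 and q=r2 and u=u and v="fst l" and a=c and b="snd l"] w Cons.prems by auto
  have s2: "R ((r1 @ [l]) @ [(u,c)] @ r2) ((r1 @ [l]) @ r2 @ [(u,c)])"
    using Cons.IH[of "r1 @ [l]"] Cons.prems by auto
  show ?case using gp_rel.gp_trans[OF s1] s2 by simp
qed

lemma decomp: assumes "tex E (pr E r) u"
  shows "\<exists>r1 c r2. r = r1 @ [(u,c)] @ r2 \<and> (\<forall>l\<in>set r2. E u (fst l)) \<and> last (pr E r {u}) = (u,c)"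
proof -
  have "pr E r {u} \<noteq> []" using assms dep_single unfolding tex_def by blast
  then have "\<exists>l\<in>set r. fst l = u" using dep_single by (auto simp: pr_def filter_empty_conv)
  from split_list_last_prop[OF this] obtain ys l zs where
    r: "r = ys @ l # zs" and l: "fst l = u" and zs: "\<forall>y\<in>set zs. fst y \<noteq> u" by blast
  have adj: "\<forall>y\<in>set zs. E u (fst y)"
  proof
    fix y assume y: "y \<in> set zs"
    show "E u (fst y)"
    proof (rule ccontr)
      assume n: "\<not> E u (fst y)"
      have dK: "dep E {u, fst y}" using dep_pair[OF n] .
      have ne: "filter (\<lambda>l. fst l \<in> {u, fst y}) zs \<noteq> []" using y by (auto simp: filter_empty_conv)
      have "last (pr E r {u, fst y}) = last (filter (\<lambda>l. fst l \<in> {u, fst y}) zs)"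
        using dK r ne by (simp add: pr_def)
      moreover have "last (filter (\<lambda>l. fst l \<in> {u, fst y}) zs) \<in> set (filter (\<lambda>l. fst l \<in> {u, fst y}) zs)" by (rule last_in_set[OF ne])
      ultimately have "fst (last (pr E r {u, fst y})) \<noteq> u" using zs by auto
      then show False using assms dK unfolding tex_def by auto
    qed
  qed
  have "filter (\<lambda>l. fst l \<in> {u}) zs = []" using zs by (auto simp: filter_empty_conv)
  then have "last (pr E r {u}) = l" using dep_single r l by (simp add: pr_def)
  then show ?thesis using r adj l by (metis append_Cons append_Nil prod.collapse)
qed

lemma pr_snoc: "pr E (r @ [(u,a)]) = upd E (pr E r) u (\<lambda>L. L @ [(u,a)])"
  by (auto simp: pr_def upd_def fun_eq_iff)

lemma pr_remove: assumes adj: "\<forall>l\<in>set r2. E u (fst l)" and X: "\<forall>l\<in>set X. fst l = u"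
  shows "pr E (r1 @ r2 @ X) = upd E (pr E (r1 @ [(u,c)] @ r2)) u (\<lambda>L. butlast L @ X)"
proof (rule ext)
  fix K
  show "pr E (r1 @ r2 @ X) K = upd E (pr E (r1 @ [(u,c)] @ r2)) u (\<lambda>L. butlast L @ X) K"
  proof (cases "dep E K")
    case False then show ?thesis by (simp add: pr_def upd_apply)
  next
    case dK: True
    show ?thesis
    proof (cases "u \<in> K")
      case True
      have "filter (\<lambda>l. fst l \<in> K) r2 = []" using adj dep_adj[OF _ dK True] by (auto simp: filter_empty_conv)
      moreover have "filter (\<lambda>l. fst l \<in> K) X = X" using X True by (auto simp: filter_id_conv)
      ultimately show ?thesis using True dK by (simp add: pr_def upd_apply)
    next
      case False
      have "filter (\<lambda>l. fst l \<in> K) X = []" using X False by (auto simp: filter_empty_conv)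
      then show ?thesis using False dK by (simp add: pr_def upd_apply)
    qed
  qed
qed

lemma realize: "w \<in> W \<Longrightarrow> \<exists>r. R w r \<and> pr E r = Fw E M w"
proof (induction w rule: rev_induct)
  case Nil then show ?case by (auto intro!: exI[of _ "[]"] gp_rel.gp_refl simp: pr_def Fw_def)
next
  case (snoc l w)
  obtain u a where la: "l = (u,a)" by fastforce
  have wW: "w \<in> W" and u: "u \<in> V" and a: "a \<in> carrier (M u)" using snoc.prems la by auto
  from snoc.IH[OF wW] obtain r where wr: "R w r" and pr: "pr E r = Fw E M w" by blast
  have rW: "r \<in> W" using gp_rel_words[OF wr] by simp
  have F: "Fw E M (w @ [l]) = actP E M (pr E r) u a" using pr la by (simp add: Fw_snoc)
  have lW: "[(u,a)] \<in> W" using u a by simp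
  have wl: "R (w @ [(u,a)]) (r @ [(u,a)])" using gp_rel_append[OF wr gp_rel.gp_refl[OF lW]] .
  interpret G: monoid "M u" using mon[OF u] .
  show ?case
  proof (cases "a = \<one>\<^bsub>M u\<^esub>")
    case True
    have "R (w @ [l]) r" using gp_rel.gp_trans[OF wl unit1[OF rW u, folded True]] True la by simp
    then show ?thesis using F True by (auto simp: actP_def)
  next
    case a1: False
    show ?thesis
    proof (cases "tex E (pr E r) u")
      case False
      have "pr E (r @ [(u,a)]) = Fw E M (w @ [l])" using F a1 False by (simp add: actP_def pr_snoc)
      then show ?thesis using wl la by blast
    next
      case T: True
      from decomp[OF T] obtain r1 c r2 where r: "r = r1 @ [(u,c)] @ r2" and adj: "\<forall>l\<in>set r2. E u (fst l)"
        and lst: "last (pr E r {u}) = (u,c)" by blast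
      have r12: "r1 \<in> W" "r2 \<in> W" "c \<in> carrier (M u)" using rW r by auto
      have s1: "R r (r1 @ r2 @ [(u,c)])" using commute_end[OF _ adj] rW r by simp
      have s2: "R (w @ [(u,a)]) ((r1 @ r2) @ [(u,c),(u,a)])"
        using gp_rel.gp_trans[OF wl gp_rel_append[OF s1 gp_rel.gp_refl[OF lW]]] by simp
      have s3: "R (w @ [(u,a)]) ((r1 @ r2) @ [(u, c \<otimes>\<^bsub>M u\<^esub> a)])"
        using gp_rel.gp_trans[OF s2 mult2[of "r1 @ r2" u c a]] r12 u a by simp
      define X where "X = (if c \<otimes>\<^bsub>M u\<^esub> a = \<one>\<^bsub>M u\<^esub> then [] else [(u, c \<otimes>\<^bsub>M u\<^esub> a)])"
      have s4: "R (w @ [(u,a)]) (r1 @ r2 @ X)"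
      proof (cases "c \<otimes>\<^bsub>M u\<^esub> a = \<one>\<^bsub>M u\<^esub>")
        case True
        have "R ((r1 @ r2) @ [(u, c \<otimes>\<^bsub>M u\<^esub> a)]) (r1 @ r2)" using unit1[of "r1 @ r2" u] r12 u True by simp
        then show ?thesis using gp_rel.gp_trans[OF s3] True unfolding X_def by simp
      next
        case False then show ?thesis using s3 unfolding X_def by simp
      qed
      have "pr E (r1 @ r2 @ X) = upd E (pr E r) u (\<lambda>L. butlast L @ X)"
        using pr_remove[OF adj, of X r1 c] r unfolding X_def by simp
      also have "\<dots> = Fw E M (w @ [l])" using F a1 T lst unfolding actP_def X_def by (simp add: Let_def)
      finally show ?thesis using s4 la by blast
    qed
  qed
qed

lemma realize_tail: assumes w: "w \<in> W" and v: "v \<in> V"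
  shows "\<exists>Z\<in>W. R w (Z @ [(v, tv E M (Fw E M w) v)])"
proof (cases "tex E (Fw E M w) v")
  case False
  have "R (w @ [(v, \<one>\<^bsub>M v\<^esub>)]) w" using unit1[OF w v] .
  then show ?thesis using False w unfolding tv_def by (auto intro: gp_rel.gp_sym)
next
  case True
  from realize[OF w] obtain r where wr: "R w r" and pr: "pr E r = Fw E M w" by blast
  have rW: "r \<in> W" using gp_rel_words[OF wr] by simp
  from decomp[of r v] True pr obtain r1 c r2 where r: "r = r1 @ [(v,c)] @ r2" and adj: "\<forall>l\<in>set r2. E v (fst l)"
    and lst: "last (pr E r {v}) = (v,c)" by auto
  have s1: "R r (r1 @ r2 @ [(v,c)])" using commute_end[OF _ adj] rW r by simp
  have "tv E M (Fw E M w) v = c" using True lst pr unfolding tv_def by simp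
  then show ?thesis using gp_rel.gp_trans[OF wr s1] rW r by (intro bexI[of _ "r1 @ r2"]) auto
qed

end



theorem lemma2p7:
  fixes V :: "'v set" and E :: "'v \<Rightarrow> 'v \<Rightarrow> bool" and M :: "'v \<Rightarrow> 'a monoid"
  assumes "is_graph V E"
    and "\<And>v. v \<in> V \<Longrightarrow> left_LCM_monoid (M v)"
    and "v \<in> V" and "x \<in> carrier (M v)" and "y \<in> carrier (M v)"
  shows "((lideal (M v) x \<inter> lideal (M v) y = {}) \<longleftrightarrow>
           (lideal (graph_product V E M) (gp_incl V E M v x) \<inter>
            lideal (graph_product V E M) (gp_incl V E M v y) = {})) \<and>
         (\<forall>z\<in>carrier (M v). lideal (M v) x \<inter> lideal (M v) y = lideal (M v) z \<longrightarrow>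
           lideal (graph_product V E M) (gp_incl V E M v x) \<inter>
           lideal (graph_product V E M) (gp_incl V E M v y) =
           lideal (graph_product V E M) (gp_incl V E M v z))"
proof -
  interpret gpl V E M
    by (rule gpl.intro) (use assms(1,2) in \<open>auto simp: left_LCM_monoid_def\<close>)
  note v = assms(3) and x = assms(4) and y = assms(5)
  interpret G: monoid "M v" using mon[OF v] .
  let ?C = "graph_product V E M"
  let ?cl = "gp_class V E M"
  have Lx: "lideal ?C (gp_incl V E M v x) = {?cl (p @ [(v,x)]) | p. p \<in> W}" by (rule lideal_incl[OF v x])
  have Ly: "lideal ?C (gp_incl V E M v y) = {?cl (p @ [(v,y)]) | p. p \<in> W}" by (rule lideal_incl[OF v y])
  have key: "tv E M (Fw E M (p @ [(v,x)])) v \<in> lideal (M v) x \<inter> lideal (M v) y"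
    if p: "p \<in> W" and q: "q \<in> W" and e: "?cl (p @ [(v,x)]) = ?cl (q @ [(v,y)])" for p q
  proof -
    have r: "R (p @ [(v,x)]) (q @ [(v,y)])" using class_eqD[OF e] q v y by simp
    have pw: "p @ [(v,x)] \<in> W" using p v x by simp
    have "tv E M (Fw E M (p @ [(v,x)])) v \<in> lideal (M v) x" using tv_rel[OF p gp_rel.gp_refl[OF pw] v x] .
    moreover have "tv E M (Fw E M (p @ [(v,x)])) v \<in> lideal (M v) y" using tv_rel[OF q r v y] .
    ultimately show ?thesis by blast
  qed
  have part1: "(lideal (M v) x \<inter> lideal (M v) y = {}) \<longleftrightarrow>
           (lideal ?C (gp_incl V E M v x) \<inter> lideal ?C (gp_incl V E M v y) = {})"
  proof
    assume em: "lideal (M v) x \<inter> lideal (M v) y = {}"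
    show "lideal ?C (gp_incl V E M v x) \<inter> lideal ?C (gp_incl V E M v y) = {}"
    proof (rule ccontr)
      assume "lideal ?C (gp_incl V E M v x) \<inter> lideal ?C (gp_incl V E M v y) \<noteq> {}"
      then obtain p q where p: "p \<in> W" and q: "q \<in> W" and e: "?cl (p @ [(v,x)]) = ?cl (q @ [(v,y)])"
        unfolding Lx Ly by blast
      from key[OF p q e] em show False by blast
    qed
  next
    assume em: "lideal ?C (gp_incl V E M v x) \<inter> lideal ?C (gp_incl V E M v y) = {}"
    show "lideal (M v) x \<inter> lideal (M v) y = {}"
    proof (rule ccontr)
      assume "lideal (M v) x \<inter> lideal (M v) y \<noteq> {}"
      then obtain c d where c: "c \<in> carrier (M v)" and d: "d \<in> carrier (M v)" and e: "c \<otimes>\<^bsub>M v\<^esub> x = d \<otimes>\<^bsub>M v\<^esub> y"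
        unfolding lideal_def by blast
      have cw: "[(v,c)] \<in> W" and dw: "[(v,d)] \<in> W" using c d v by auto
      have "R ([] @ [(v,c),(v,x)]) ([] @ [(v, c \<otimes>\<^bsub>M v\<^esub> x)])" by (rule mult2) (use v c x in auto)
      moreover have "R ([] @ [(v,d),(v,y)]) ([] @ [(v, d \<otimes>\<^bsub>M v\<^esub> y)])" by (rule mult2) (use v d y in auto)
      ultimately have "R ([(v,c)] @ [(v,x)]) ([(v,d)] @ [(v,y)])" using e by (auto intro: gp_rel.gp_trans gp_rel.gp_sym)
      then have "?cl ([(v,c)] @ [(v,x)]) = ?cl ([(v,d)] @ [(v,y)])" by (rule class_eq)
      then have "?cl ([(v,c)] @ [(v,x)]) \<in> lideal ?C (gp_incl V E M v x) \<inter> lideal ?C (gp_incl V E M v y)"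
        unfolding Lx Ly using cw dw by blast
      with em show False by blast
    qed
  qed
  have part2: "lideal ?C (gp_incl V E M v x) \<inter> lideal ?C (gp_incl V E M v y) = lideal ?C (gp_incl V E M v z)"
    if z: "z \<in> carrier (M v)" and eq: "lideal (M v) x \<inter> lideal (M v) y = lideal (M v) z" for z
  proof (intro equalityI subsetI)
    fix X assume "X \<in> lideal ?C (gp_incl V E M v x) \<inter> lideal ?C (gp_incl V E M v y)"
    then obtain p q where p: "p \<in> W" and q: "q \<in> W" and Xp: "X = ?cl (p @ [(v,x)])" and e: "?cl (p @ [(v,x)]) = ?cl (q @ [(v,y)])"
      unfolding Lx Ly by blast
    define w where "w = p @ [(v,x)]"
    have wW: "w \<in> W" using p v x unfolding w_def by simp
    have "tv E M (Fw E M w) v \<in> lideal (M v) z" using key[OF p q e] eq unfolding w_def by blast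
    then obtain e where ec: "e \<in> carrier (M v)" and se: "tv E M (Fw E M w) v = e \<otimes>\<^bsub>M v\<^esub> z"
      unfolding lideal_def by blast
    from realize_tail[OF wW v] obtain Z where Z: "Z \<in> W" and wZ: "R w (Z @ [(v, tv E M (Fw E M w) v)])" by blast
    have "R (Z @ [(v,e),(v,z)]) (Z @ [(v, e \<otimes>\<^bsub>M v\<^esub> z)])" by (rule mult2[OF Z v ec z])
    then have "R w ((Z @ [(v,e)]) @ [(v,z)])" using wZ se by (auto intro: gp_rel.gp_trans gp_rel.gp_sym)
    then have "X = ?cl ((Z @ [(v,e)]) @ [(v,z)])" using class_eq Xp unfolding w_def by blast
    moreover have "Z @ [(v,e)] \<in> W" using Z v ec by simp
    ultimately show "X \<in> lideal ?C (gp_incl V E M v z)" unfolding lideal_incl[OF v z] by blast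
  next
    fix X assume "X \<in> lideal ?C (gp_incl V E M v z)"
    then obtain p where p: "p \<in> W" and Xp: "X = ?cl (p @ [(v,z)])" unfolding lideal_incl[OF v z] by blast
    have "z \<in> lideal (M v) z" unfolding lideal_def using z G.l_one G.one_closed by (metis (mono_tags, lifting) mem_Collect_eq)
    then have "z \<in> lideal (M v) x" "z \<in> lideal (M v) y" using eq by auto
    then obtain c d where c: "c \<in> carrier (M v)" "z = c \<otimes>\<^bsub>M v\<^esub> x" and d: "d \<in> carrier (M v)" "z = d \<otimes>\<^bsub>M v\<^esub> y"
      unfolding lideal_def by blast
    have "R (p @ [(v,c),(v,x)]) (p @ [(v,z)])" using mult2[OF p v c(1) x] c(2) by simp
    then have "X = ?cl ((p @ [(v,c)]) @ [(v,x)])" using class_eq Xp by (metis append.assoc append_Cons append_Nil gp_rel.gp_sym)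
    moreover have "p @ [(v,c)] \<in> W" using p v c by simp
    ultimately have 1: "X \<in> lideal ?C (gp_incl V E M v x)" unfolding Lx by blast
    have "R (p @ [(v,d),(v,y)]) (p @ [(v,z)])" using mult2[OF p v d(1) y] d(2) by simp
    then have "X = ?cl ((p @ [(v,d)]) @ [(v,y)])" using class_eq Xp by (metis append.assoc append_Cons append_Nil gp_rel.gp_sym)
    moreover have "p @ [(v,d)] \<in> W" using p v d by simp
    ultimately have 2: "X \<in> lideal ?C (gp_incl V E M v y)" unfolding Ly by blast
    from 1 2 show "X \<in> lideal ?C (gp_incl V E M v x) \<inter> lideal ?C (gp_incl V E M v y)" by blast
  qed
  show ?thesis using part1 part2 by blast
qed



end
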